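(* Let $k=k(n)$ be integers with $1\le k=O(\log n)$ and let $h(n)=o(n/\log^2 n)$. For every $\eta>0$ there is $n_0$ such that for all $n\ge n_0$ and every $X\subseteq Q=\{0,1\}^n$ with $\mu(X)\ge\exp[-h(n)]$, if $x$ is chosen uniformly from $X$ then $$\Pr(T(x)\in X)<(1+\eta)\mu(X).$$
   Context: $Q=\{0,1\}^n$ with uniform probability measure $\mu$. For $x\in Q$, $T(x)$ is the random element of $Q$ obtained by choosing $K$ uniformly from the $k$-subsets of $[n]$, keeping $x_i$ for $i\in K$, and replacing each $x_i$ with $i\notin K$ by an independent uniform bit (independently of everything else, including the choice of $x$). *)

theory Defs
  imports "HOL-Probability.Probability" "HOL-Library.Landau_Symbols"
begin

text \<open>The cube Q = {0,1}^n, represented as bit vectors x :: nat => bool with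
  x i = False for i >= n (coordinates are 0..n-1).\<close>
definition cube :: "nat \<Rightarrow> (nat \<Rightarrow> bool) set" where
  "cube n = {x. \<forall>i\<ge>n. \<not> x i}"

definition mu :: "nat \<Rightarrow> (nat \<Rightarrow> bool) set \<Rightarrow> real" where
  "mu n X = real (card X) / 2 ^ n"

text \<open>T(x): choose K uniformly among k-subsets of [n], keep x_i for i in K,
  replace the other coordinates by independent uniform bits (realised as the
  coordinates of an independent uniform point y of the cube).\<close>
definition T :: "nat \<Rightarrow> nat \<Rightarrow> (nat \<Rightarrow> bool) \<Rightarrow> (nat \<Rightarrow> bool) pmf" where
  "T n k x = do {
     K \<leftarrow> pmf_of_set {K. K \<subseteq> {..<n} \<and> card K = k};
     y \<leftarrow> pmf_of_set (cube n);
     return_pmf (\<lambda>i. if i \<in> K then x i else y i)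
   }"

end

theory Submission
  imports Defs "HOL-Real_Asymp.Real_Asymp"
begin

lemma ent_v_pos:
  fixes v :: real assumes "0 \<le> v" "v < 1"
  shows "v\<^sup>2/2 \<le> (1+v)*ln(1+v) + (1-v)*ln(1-v)"
proof -
  define F where "F t = (1+t)*ln(1+t) + (1-t)*ln(1-t) - t\<^sup>2/2" for t :: real
  have "F 0 \<le> F v"
  proof (rule DERIV_nonneg_imp_increasing_open[OF assms(1)])
    fix t :: real assume t: "0 < t" "t < v"
    have d: "DERIV F t :> (ln(1+t) + 1 - ln(1-t) - 1 - t)"
      unfolding F_def using t assms
      by (auto intro!: derivative_eq_intros)
    have "ln (1-t) \<le> (1-t) - 1" using t assms by (intro ln_le_minus_one) auto
    moreover have "ln (1+t) \<ge> 0" using t by simp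
    ultimately have "ln(1+t) + 1 - ln(1-t) - 1 - t \<ge> 0" by linarith
    with d show "\<exists>y. DERIV F t :> y \<and> 0 \<le> y" by blast
  next
    show "continuous_on {0..v} F" unfolding F_def using assms
      by (auto intro!: continuous_intros)
  qed
  thus ?thesis unfolding F_def by simp
qed

lemma ent_v:
  fixes v :: real assumes "-1 < v" "v < 1"
  shows "v\<^sup>2/2 \<le> (1+v)*ln(1+v) + (1-v)*ln(1-v)"
proof (cases "v \<ge> 0")
  case True thus ?thesis using ent_v_pos assms by auto
next
  case False
  have "(-v)\<^sup>2/2 \<le> (1+(-v))*ln(1+(-v)) + (1-(-v))*ln(1-(-v))"
    using False assms by (intro ent_v_pos) auto
  thus ?thesis by (simp add: algebra_simps)
qed

lemma ent_s:
  fixes s0 s1 :: real assumes "0 < s0" "0 < s1"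
  shows "(s1-s0)\<^sup>2/(4 * (s0+s1)) \<le> s0*ln s0 + s1*ln s1 - (s0+s1)*ln(s0+s1) + (s0+s1)*ln 2"
proof -
  define s where "s = s0+s1"
  have s: "s > 0" using assms s_def by simp
  define v where "v = (s1-s0)/s"
  have v1: "1+v = 2 * s1/s" "1-v = 2 * s0/s" using s unfolding v_def s_def by (auto simp: field_simps)
  have eqA: "s1*(ln 2 + ln s1 - ln s) + s0*(ln 2 + ln s0 - ln s) = s0*ln s0 + s1*ln s1 - s*ln s + s*ln 2"
    unfolding s_def by (simp add: algebra_simps)
  have "-1 < v" "v < 1" unfolding v_def s_def using assms by (auto simp: field_simps)
  hence "v\<^sup>2/2 \<le> (1+v)*ln(1+v) + (1-v)*ln(1-v)" by (rule ent_v)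
  also have "\<dots> = (2 * s1/s)*(ln 2 + ln s1 - ln s) + (2 * s0/s)*(ln 2 + ln s0 - ln s)"
    unfolding v1 using assms s by (simp add: ln_div ln_mult)
  also have "\<dots> = (2/s) * (s1*(ln 2 + ln s1 - ln s) + s0*(ln 2 + ln s0 - ln s))"
    using s by (simp add: divide_simps)
  also have "(2/s) * (s1*(ln 2 + ln s1 - ln s) + s0*(ln 2 + ln s0 - ln s)) = (2/s) * (s0*ln s0 + s1*ln s1 - s*ln s + s*ln 2)" using eqA by simp
  finally have "v\<^sup>2/2 \<le> (2/s) * (s0*ln s0 + s1*ln s1 - s*ln s + s*ln 2)" .
  hence "(s/2)*(v\<^sup>2/2) \<le> (s/2)*((2/s) * (s0*ln s0 + s1*ln s1 - s*ln s + s*ln 2))"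
    using s by (intro mult_left_mono) auto
  moreover have "(s/2)*(v\<^sup>2/2) = (s1-s0)\<^sup>2/(4 * s)" unfolding v_def using s
    by (simp add: field_simps power2_eq_square)
  moreover have "(s/2)*((2/s) * (s0*ln s0 + s1*ln s1 - s*ln s + s*ln 2)) = s0*ln s0 + s1*ln s1 - s*ln s + s*ln 2"
    using s by simp
  ultimately have "(s1-s0)\<^sup>2/(4 * s) \<le> s0*ln s0 + s1*ln s1 - s*ln s + s*ln 2" by linarith
  thus ?thesis unfolding s_def .
qed

definition dd :: "(nat\<Rightarrow>bool) set \<Rightarrow> nat \<Rightarrow> real" where
  "dd C i = real (card {x\<in>C. x i}) - real (card {x\<in>C. \<not> x i})"

lemma cs2:
  fixes a b s0 s1 :: real assumes "0 < s0" "0 < s1"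
  shows "(a+b)\<^sup>2 \<le> ((s0+s1)/s0) * a\<^sup>2 + ((s0+s1)/s1) * b\<^sup>2"
proof -
  have "((s0+s1)/s0) * a\<^sup>2 + ((s0+s1)/s1) * b\<^sup>2 - (a+b)\<^sup>2 = (s1 * a - s0 * b)\<^sup>2/(s0 * s1)"
    using assms by (simp add: field_simps power2_eq_square)
  moreover have "(s1 * a - s0 * b)\<^sup>2/(s0 * s1) \<ge> 0" using assms by simp
  ultimately show ?thesis by linarith
qed

lemma level1:
  assumes "finite J"
  shows "finite C \<Longrightarrow> C \<noteq> {} \<Longrightarrow> (\<forall>x\<in>C. \<forall>z\<in>C. \<forall>i. i \<notin> J \<longrightarrow> x i = z i) \<Longrightarrow>
    (\<Sum>i\<in>J. (dd C i)\<^sup>2) \<le> 4 * (real (card C))\<^sup>2 * (real (card J) * ln 2 - ln (real (card C)))"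
  using assms
proof (induction J arbitrary: C rule: finite_induct)
  case empty
  then obtain x where x: "x \<in> C" by blast
  have "\<forall>z\<in>C. \<forall>i. z i = x i" using empty(3) x by blast
  hence "\<forall>z\<in>C. z = x" by (simp add: fun_eq_iff)
  hence "C = {x}" using x by blast
  thus ?case by simp
next
  case (insert j J C)
  define C0 where "C0 = {x\<in>C. \<not> x j}"
  define C1 where "C1 = {x\<in>C. x j}"
  have fin: "finite C0" "finite C1" using insert.prems(1) unfolding C0_def C1_def by auto
  have agr0: "\<forall>x\<in>C0. \<forall>z\<in>C0. \<forall>i. i \<notin> J \<longrightarrow> x i = z i"
  proof (intro ballI allI impI)
    fix x z i assume xz: "x \<in> C0" "z \<in> C0" "i \<notin> J"
    show "x i = z i"
    proof (cases "i = j")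
      case True thus ?thesis using xz unfolding C0_def by auto
    next
      case False thus ?thesis using xz insert.prems(3) unfolding C0_def by auto
    qed
  qed
  have agr1: "\<forall>x\<in>C1. \<forall>z\<in>C1. \<forall>i. i \<notin> J \<longrightarrow> x i = z i"
  proof (intro ballI allI impI)
    fix x z i assume xz: "x \<in> C1" "z \<in> C1" "i \<notin> J"
    show "x i = z i"
    proof (cases "i = j")
      case True thus ?thesis using xz unfolding C1_def by auto
    next
      case False thus ?thesis using xz insert.prems(3) unfolding C1_def by auto
    qed
  qed
  have agrC: "\<forall>x\<in>C. \<forall>z\<in>C. \<forall>i. i \<notin> insert j J \<longrightarrow> x i = z i" using insert.prems(3) .
  define s0 where "s0 = real (card C0)"
  define s1 where "s1 = real (card C1)"
  define s where "s = real (card C)"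
  have cardC: "card C = card C0 + card C1"
  proof -
    have "C = C0 \<union> C1" "C0 \<inter> C1 = {}" unfolding C0_def C1_def by auto
    thus ?thesis using fin card_Un_disjoint by metis
  qed
  hence ss: "s = s0 + s1" unfolding s_def s0_def s1_def by simp
  have ddsplit: "dd C i = dd C0 i + dd C1 i" for i
  proof -
    have a: "card {x\<in>C. x i} = card {x\<in>C0. x i} + card {x\<in>C1. x i}"
    proof -
      have "{x\<in>C. x i} = {x\<in>C0. x i} \<union> {x\<in>C1. x i}" "{x\<in>C0. x i} \<inter> {x\<in>C1. x i} = {}"
        unfolding C0_def C1_def by auto
      thus ?thesis using fin by (simp add: card_Un_disjoint)
    qed
    have b: "card {x\<in>C. \<not> x i} = card {x\<in>C0. \<not> x i} + card {x\<in>C1. \<not> x i}"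
    proof -
      have "{x\<in>C. \<not> x i} = {x\<in>C0. \<not> x i} \<union> {x\<in>C1. \<not> x i}" "{x\<in>C0. \<not> x i} \<inter> {x\<in>C1. \<not> x i} = {}"
        unfolding C0_def C1_def by auto
      thus ?thesis using fin by (simp add: card_Un_disjoint)
    qed
    show ?thesis unfolding dd_def a b by simp
  qed
  have ddj: "dd C j = s1 - s0" unfolding dd_def s0_def s1_def C0_def C1_def by simp
  have sumsplit: "(\<Sum>i\<in>insert j J. (dd C i)\<^sup>2) = (s1 - s0)\<^sup>2 + (\<Sum>i\<in>J. (dd C i)\<^sup>2)"
    using insert(1,2) ddj by simp
  have ln2: "1 \<le> 4 * ln (2::real)" using ln2_ge_two_thirds by linarith
  show ?case
  proof (cases "C0 = {}")
    case True
    hence "C1 = C" unfolding C0_def C1_def by auto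
    hence "\<forall>x\<in>C. \<forall>z\<in>C. \<forall>i. i \<notin> J \<longrightarrow> x i = z i" using agr1 by simp
    hence IH: "(\<Sum>i\<in>J. (dd C i)\<^sup>2) \<le> 4 * s\<^sup>2 * (real (card J) * ln 2 - ln s)"
      using insert.IH[OF insert.prems(1,2)] unfolding s_def by blast
    have s0: "s0 = 0" "s1 = s" using True \<open>C1 = C\<close> unfolding s0_def s1_def s_def by auto
    have "(s1 - s0)\<^sup>2 \<le> 4 * s\<^sup>2 * ln 2"
    proof -
      have "s\<^sup>2 * 1 \<le> s\<^sup>2 * (4 * ln 2)" using ln2 by (intro mult_left_mono) auto
      thus ?thesis using s0 by (simp add: power2_commute)
    qed
    hence "(\<Sum>i\<in>insert j J. (dd C i)\<^sup>2) \<le> 4 * s\<^sup>2 * ln 2 + 4 * s\<^sup>2 * (real (card J) * ln 2 - ln s)"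
      using sumsplit IH by linarith
    also have "\<dots> = 4 * s\<^sup>2 * (real (card (insert j J)) * ln 2 - ln s)"
      using insert(1,2) by (simp add: algebra_simps)
    finally show ?thesis unfolding s_def .
  next
    case F0: False
    show ?thesis
    proof (cases "C1 = {}")
      case True
      hence "C0 = C" unfolding C0_def C1_def by auto
      hence "\<forall>x\<in>C. \<forall>z\<in>C. \<forall>i. i \<notin> J \<longrightarrow> x i = z i" using agr0 by simp
      hence IH: "(\<Sum>i\<in>J. (dd C i)\<^sup>2) \<le> 4 * s\<^sup>2 * (real (card J) * ln 2 - ln s)"
        using insert.IH[OF insert.prems(1,2)] unfolding s_def by blast
      have s0: "s1 = 0" "s0 = s" using True \<open>C0 = C\<close> unfolding s0_def s1_def s_def by auto
      have "(s1 - s0)\<^sup>2 \<le> 4 * s\<^sup>2 * ln 2"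
      proof -
        have "s\<^sup>2 * 1 \<le> s\<^sup>2 * (4 * ln 2)" using ln2 by (intro mult_left_mono) auto
        thus ?thesis using s0 by (simp add: power2_commute)
      qed
      hence "(\<Sum>i\<in>insert j J. (dd C i)\<^sup>2) \<le> 4 * s\<^sup>2 * ln 2 + 4 * s\<^sup>2 * (real (card J) * ln 2 - ln s)"
        using sumsplit IH by linarith
      also have "\<dots> = 4 * s\<^sup>2 * (real (card (insert j J)) * ln 2 - ln s)"
        using insert(1,2) by (simp add: algebra_simps)
      finally show ?thesis unfolding s_def .
    next
      case F1: False
      have p0: "s0 > 0" "s1 > 0" using F0 F1 fin unfolding s0_def s1_def by auto
      have IH0: "(\<Sum>i\<in>J. (dd C0 i)\<^sup>2) \<le> 4 * s0\<^sup>2 * (real (card J) * ln 2 - ln s0)"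
        using insert.IH[OF fin(1) F0 agr0] unfolding s0_def .
      have IH1: "(\<Sum>i\<in>J. (dd C1 i)\<^sup>2) \<le> 4 * s1\<^sup>2 * (real (card J) * ln 2 - ln s1)"
        using insert.IH[OF fin(2) F1 agr1] unfolding s1_def .
      define m where "m = real (card J)"
      have "(\<Sum>i\<in>J. (dd C i)\<^sup>2) \<le> (\<Sum>i\<in>J. (s/s0) * (dd C0 i)\<^sup>2 + (s/s1) * (dd C1 i)\<^sup>2)"
        unfolding ddsplit ss using p0 by (intro sum_mono cs2) auto
      also have "\<dots> = (s/s0) * (\<Sum>i\<in>J. (dd C0 i)\<^sup>2) + (s/s1) * (\<Sum>i\<in>J. (dd C1 i)\<^sup>2)"
        by (simp add: sum.distrib sum_distrib_left)
      also have "\<dots> \<le> (s/s0) * (4 * s0\<^sup>2 * (m * ln 2 - ln s0)) + (s/s1) * (4 * s1\<^sup>2 * (m * ln 2 - ln s1))"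
        using IH0 IH1 p0 ss unfolding m_def by (intro add_mono mult_left_mono) auto
      also have "\<dots> = 4 * s * s0 * (m * ln 2 - ln s0) + 4 * s * s1 * (m * ln 2 - ln s1)"
        using p0 by (simp add: power2_eq_square)
      finally have A: "(\<Sum>i\<in>J. (dd C i)\<^sup>2) \<le> 4 * s * s0 * (m * ln 2 - ln s0) + 4 * s * s1 * (m * ln 2 - ln s1)" .
      have B: "(s1-s0)\<^sup>2/(4 * s) \<le> s0 * ln s0 + s1 * ln s1 - s * ln s + s * ln 2"
        using ent_s[OF p0] ss by simp
      have sp: "s > 0" using p0 ss by simp
      have B': "(s1-s0)\<^sup>2 \<le> 4 * s * (s0 * ln s0 + s1 * ln s1 - s * ln s + s * ln 2)"
        using B sp by (simp add: divide_le_eq mult.commute)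
      have E: "4 * s * s0 * (m * ln 2 - ln s0) + 4 * s * s1 * (m * ln 2 - ln s1) + 4 * s * (s0 * ln s0 + s1 * ln s1 - s * ln s + s * ln 2)
             = 4 * s\<^sup>2 * ((m+1) * ln 2 - ln s)"
        using ss by (simp add: algebra_simps power2_eq_square)
      have "(\<Sum>i\<in>insert j J. (dd C i)\<^sup>2) \<le> 4 * s\<^sup>2 * ((m+1) * ln 2 - ln s)"
        using sumsplit A B' E by linarith
      moreover have "real (card (insert j J)) = m + 1" using insert(1,2) unfolding m_def by simp
      ultimately show ?thesis unfolding s_def by simp
    qed
  qed
qed

definition agr :: "nat set \<Rightarrow> (nat\<Rightarrow>bool) \<Rightarrow> (nat\<Rightarrow>bool) \<Rightarrow> bool" where
  "agr K x z \<longleftrightarrow> (\<forall>i\<in>K. x i = z i)"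
definition cls :: "(nat\<Rightarrow>bool) set \<Rightarrow> nat set \<Rightarrow> (nat\<Rightarrow>bool) \<Rightarrow> (nat\<Rightarrow>bool) set" where
  "cls X K x = {z\<in>X. agr K x z}"
definition SS :: "(nat\<Rightarrow>bool) set \<Rightarrow> nat set \<Rightarrow> real" where
  "SS X K = (\<Sum>x\<in>X. real (card (cls X K x)))"

lemma cls_eq: "y \<in> cls X K x \<Longrightarrow> cls X K y = cls X K x"
  unfolding cls_def agr_def by auto

lemma in_cls: "x \<in> X \<Longrightarrow> x \<in> cls X K x"
  unfolding cls_def agr_def by auto

lemma fin_cls: "finite X \<Longrightarrow> finite (cls X K x)"
  unfolding cls_def by auto

lemma card_cls_pos: "finite X \<Longrightarrow> x \<in> X \<Longrightarrow> real (card (cls X K x)) > 0"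
  proof -
  assume a: "finite X" "x \<in> X"
  hence "cls X K x \<noteq> {}" "finite (cls X K x)" using in_cls fin_cls by blast+
  thus ?thesis by (simp add: card_gt_0_iff)
qed

lemma avg:
  assumes "finite X"
  shows "(\<Sum>x\<in>X. F x) = (\<Sum>x\<in>X. (\<Sum>y\<in>cls X K x. F y) / real (card (cls X K x)))"
proof -
  have "(\<Sum>x\<in>X. (\<Sum>y\<in>cls X K x. F y) / real (card (cls X K x)))
      = (\<Sum>x\<in>X. \<Sum>y\<in>cls X K x. F y / real (card (cls X K y)))"
    by (intro sum.cong refl) (simp add: sum_divide_distrib cls_eq)
  also have "\<dots> = (\<Sum>x\<in>X. \<Sum>y\<in>X. if agr K x y then F y / real (card (cls X K y)) else 0)"
    unfolding cls_def using assms by (simp add: sum.inter_filter)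
  also have "\<dots> = (\<Sum>y\<in>X. \<Sum>x\<in>X. if agr K x y then F y / real (card (cls X K y)) else 0)"
    by (rule sum.swap)
  also have "\<dots> = (\<Sum>y\<in>X. \<Sum>x\<in>{x\<in>X. agr K x y}. F y / real (card (cls X K y)))"
    by (intro sum.cong[OF refl]) (simp only: sum.inter_filter[OF assms])
  also have "\<dots> = (\<Sum>y\<in>X. F y / real (card (cls X K y)) * real (card (cls X K y)))"
  proof (intro sum.cong refl)
    fix y assume "y \<in> X"
    have "{x\<in>X. agr K x y} = cls X K y" unfolding cls_def agr_def by auto
    thus "(\<Sum>x\<in>{x\<in>X. agr K x y}. F y / real (card (cls X K y))) = F y / real (card (cls X K y)) * real (card (cls X K y))"
      by simp
  qed
  also have "\<dots> = (\<Sum>y\<in>X. F y)"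
  proof (intro sum.cong refl)
    fix y assume "y \<in> X"
    hence "real (card (cls X K y)) \<noteq> 0" using card_cls_pos[OF assms, of y K] by linarith
    thus "F y / real (card (cls X K y)) * real (card (cls X K y)) = F y" by simp
  qed
  finally show ?thesis by simp
qed

lemma ncls:
  assumes "finite X" "finite K"
  shows "(\<Sum>x\<in>X. 1 / real (card (cls X K x))) \<le> 2 ^ card K"
proof -
  define r where "r x = {i\<in>K. x i}" for x :: "nat\<Rightarrow>bool"
  have clsr: "cls X K x = {z\<in>X. r z = r x}" for x
    unfolding cls_def agr_def r_def by auto
  have "(\<Sum>x\<in>X. 1 / real (card (cls X K x))) = (\<Sum>a\<in>r`X. \<Sum>x\<in>{x\<in>X. r x = a}. 1 / real (card (cls X K x)))"
    using assms(1) by (rule sum.image_gen)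
  also have "\<dots> = (\<Sum>a\<in>r`X. 1)"
  proof (intro sum.cong refl)
    fix a assume "a \<in> r ` X"
    hence ne: "{x\<in>X. r x = a} \<noteq> {}" by auto
    have "(\<Sum>x\<in>{x\<in>X. r x = a}. 1 / real (card (cls X K x))) = (\<Sum>x\<in>{x\<in>X. r x = a}. 1 / real (card {x\<in>X. r x = a}))"
      by (intro sum.cong refl) (simp add: clsr)
    also have "\<dots> = 1" using ne assms(1) by simp
    finally show "(\<Sum>x\<in>{x\<in>X. r x = a}. 1 / real (card (cls X K x))) = 1" .
  qed
  also have "\<dots> = real (card (r ` X))" by simp
  also have "\<dots> \<le> real (card (Pow K))"
    using assms(2) by (intro of_nat_mono card_mono) (auto simp: r_def)
  also have "\<dots> = 2 ^ card K" using assms(2) by (simp add: card_Pow)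
  finally show ?thesis .
qed

lemma S_lower:
  assumes "finite X" "finite K" "X \<noteq> {}"
  shows "(real (card X))\<^sup>2 \<le> 2 ^ card K * SS X K"
proof -
  define c where "c x = real (card (cls X K x))" for x
  define N where "N = (\<Sum>x\<in>X. 1 / c x)"
  have cpos: "x \<in> X \<Longrightarrow> c x > 0" for x using card_cls_pos[OF assms(1)] c_def by auto
  have Npos: "N > 0" unfolding N_def using cpos assms by (intro sum_pos) auto
  have N2: "N \<le> 2 ^ card K" unfolding N_def c_def using ncls[OF assms(1,2)] .
  define t where "t = real (card X) / N"
  have amgm: "2 * t \<le> c x + t\<^sup>2 * (1 / c x)" if "x \<in> X" for x
  proof -
    have "c x + t\<^sup>2 * (1 / c x) - 2 * t = (c x - t)\<^sup>2 / c x"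
      using cpos[OF that] by (simp add: field_simps power2_eq_square)
    moreover have "(c x - t)\<^sup>2 / c x \<ge> 0" using cpos[OF that] by simp
    ultimately show ?thesis by linarith
  qed
  have "(\<Sum>x\<in>X. 2 * t) \<le> (\<Sum>x\<in>X. c x + t\<^sup>2 * (1 / c x))"
    using amgm by (rule sum_mono)
  hence "2 * t * real (card X) \<le> SS X K + t\<^sup>2 * N"
    unfolding SS_def N_def c_def by (simp add: sum.distrib sum_distrib_left mult.commute)
  moreover have "2 * t * real (card X) = 2 * (real (card X))\<^sup>2 / N" "t\<^sup>2 * N = (real (card X))\<^sup>2 / N"
    unfolding t_def using Npos by (simp_all add: power2_eq_square field_simps)
  ultimately have "(real (card X))\<^sup>2 / N \<le> SS X K" by linarith
  hence "(real (card X))\<^sup>2 \<le> N * SS X K" using Npos by (simp add: divide_le_eq mult.commute)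
  also have "\<dots> \<le> 2 ^ card K * SS X K"
    using N2 unfolding SS_def by (intro mult_right_mono sum_nonneg) auto
  finally show ?thesis .
qed

definition sg :: "(nat\<Rightarrow>bool) \<Rightarrow> nat \<Rightarrow> real" where
  "sg x i = (if x i then 1 else -1)"

lemma cls_ins: "i \<notin> K \<Longrightarrow> cls X (insert i K) x = {z\<in>cls X K x. z i = x i}"
  unfolding cls_def agr_def by auto

lemma card_split: "finite C \<Longrightarrow> card C = card {z\<in>C. z i} + card {z\<in>C. \<not> z i}"
proof -
  assume f: "finite C"
  have "C = {z\<in>C. z i} \<union> {z\<in>C. \<not> z i}" "{z\<in>C. z i} \<inter> {z\<in>C. \<not> z i} = {}" by auto
  thus ?thesis using f by (metis (no_types, lifting) card_Un_disjoint finite_Un)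
qed

lemma two_card: "finite C \<Longrightarrow> 2 * real (card {z\<in>C. z i = x i}) = real (card C) + sg x i * dd C i"
proof -
  assume f: "finite C"
  note cs = card_split[OF f, of i]
  show ?thesis
  proof (cases "x i")
    case True
    hence "{z\<in>C. z i = x i} = {z\<in>C. z i}" by auto
    thus ?thesis using True cs unfolding sg_def dd_def by simp
  next
    case False
    hence "{z\<in>C. z i = x i} = {z\<in>C. \<not> z i}" by auto
    thus ?thesis using False cs unfolding sg_def dd_def by simp
  qed
qed

lemma sum_sg: "finite C \<Longrightarrow> (\<Sum>y\<in>C. sg y i) = dd C i"
proof -
  assume f: "finite C"
  have "(\<Sum>y\<in>C. sg y i) = (\<Sum>y\<in>{z\<in>C. z i}. 1) + (\<Sum>y\<in>{z\<in>C. \<not> z i}. -1)"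
    unfolding sg_def using f by (simp add: sum.If_cases Int_def)
  thus ?thesis unfolding dd_def by simp
qed

lemma ins_step:
  assumes "finite X" "i \<notin> K"
  shows "2 * SS X (insert i K) = SS X K + (\<Sum>x\<in>X. (dd (cls X K x) i)\<^sup>2 / real (card (cls X K x)))"
proof -
  have "2 * SS X (insert i K) = (\<Sum>x\<in>X. 2 * real (card (cls X (insert i K) x)))"
    unfolding SS_def by (simp add: sum_distrib_left)
  also have "\<dots> = (\<Sum>x\<in>X. real (card (cls X K x)) + sg x i * dd (cls X K x) i)"
    using assms by (intro sum.cong refl) (simp add: cls_ins two_card fin_cls)
  also have "\<dots> = SS X K + (\<Sum>x\<in>X. sg x i * dd (cls X K x) i)"
    unfolding SS_def by (simp add: sum.distrib)
  also have "(\<Sum>x\<in>X. sg x i * dd (cls X K x) i)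
      = (\<Sum>x\<in>X. (\<Sum>y\<in>cls X K x. sg y i * dd (cls X K y) i) / real (card (cls X K x)))"
    using assms(1) by (rule avg)
  also have "\<dots> = (\<Sum>x\<in>X. (dd (cls X K x) i)\<^sup>2 / real (card (cls X K x)))"
  proof (intro sum.cong refl)
    fix x assume "x \<in> X"
    have "(\<Sum>y\<in>cls X K x. sg y i * dd (cls X K y) i) = (\<Sum>y\<in>cls X K x. sg y i * dd (cls X K x) i)"
      by (intro sum.cong refl) (simp add: cls_eq)
    also have "\<dots> = (\<Sum>y\<in>cls X K x. sg y i) * dd (cls X K x) i" by (simp add: sum_distrib_right)
    also have "\<dots> = (dd (cls X K x) i)\<^sup>2" using fin_cls[OF assms(1)] by (simp add: sum_sg power2_eq_square)
    finally show "(\<Sum>y\<in>cls X K x. sg y i * dd (cls X K y) i) / real (card (cls X K x)) = (dd (cls X K x) i)\<^sup>2 / real (card (cls X K x))"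
      by simp
  qed
  finally show ?thesis .
qed

lemma step:
  assumes I: "finite I" and X: "finite X" "X \<noteq> {}" and XI: "\<forall>x\<in>X. \<forall>i. i \<notin> I \<longrightarrow> \<not> x i"
    and K: "K \<subseteq> I"
  shows "2 * (\<Sum>i\<in>I-K. SS X (insert i K)) \<le> SS X K * (real (card (I-K)) + 4 * (real (card I) * ln 2 - ln (real (card X))))"
proof -
  define c where "c x = real (card (cls X K x))" for x
  define m where "m = real (card (I-K))"
  define S where "S = SS X K"
  have cpos: "x \<in> X \<Longrightarrow> c x > 0" for x using card_cls_pos[OF X(1)] c_def by auto
  have Sdef: "S = (\<Sum>x\<in>X. c x)" unfolding S_def SS_def c_def ..
  have Spos: "S > 0" unfolding Sdef using cpos X by (intro sum_pos) auto
  have finK: "finite K" using K I finite_subset by blast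
  have "2 * (\<Sum>i\<in>I-K. SS X (insert i K)) = (\<Sum>i\<in>I-K. 2 * SS X (insert i K))"
    by (simp add: sum_distrib_left)
  also have "\<dots> = (\<Sum>i\<in>I-K. S + (\<Sum>x\<in>X. (dd (cls X K x) i)\<^sup>2 / c x))"
    using X(1) by (intro sum.cong refl) (simp add: ins_step S_def c_def)
  also have "\<dots> = m * S + (\<Sum>x\<in>X. (\<Sum>i\<in>I-K. (dd (cls X K x) i)\<^sup>2) / c x)"
    by (simp add: sum.distrib m_def sum.swap[of _ "I-K"] sum_divide_distrib)
  also have "\<dots> \<le> m * S + (\<Sum>x\<in>X. 4 * c x * (m * ln 2 - ln (c x)))"
  proof -
    have "(\<Sum>i\<in>I-K. (dd (cls X K x) i)\<^sup>2) / c x \<le> 4 * c x * (m * ln 2 - ln (c x))" if x: "x \<in> X" for x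
    proof -
      have agr': "\<forall>z\<in>cls X K x. \<forall>w\<in>cls X K x. \<forall>i. i \<notin> I-K \<longrightarrow> z i = w i"
      proof (intro ballI allI impI)
        fix z w i assume zw: "z \<in> cls X K x" "w \<in> cls X K x" "i \<notin> I - K"
        show "z i = w i"
        proof (cases "i \<in> K")
          case True thus ?thesis using zw unfolding cls_def agr_def by auto
        next
          case False hence "i \<notin> I" using zw by auto
          thus ?thesis using zw XI unfolding cls_def by auto
        qed
      qed
      have L: "(\<Sum>i\<in>I-K. (dd (cls X K x) i)\<^sup>2) \<le> 4 * (c x)\<^sup>2 * (m * ln 2 - ln (c x))"
        using level1[OF _ fin_cls[OF X(1)] _ agr'] I in_cls[OF x, of K] unfolding c_def m_def by blast
      have "(\<Sum>i\<in>I-K. (dd (cls X K x) i)\<^sup>2) / c x \<le> 4 * (c x)\<^sup>2 * (m * ln 2 - ln (c x)) / c x"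
        using L cpos[OF x] by (simp add: divide_right_mono)
      also have "\<dots> = 4 * c x * (m * ln 2 - ln (c x))" using cpos[OF x] by (simp add: power2_eq_square)
      finally show ?thesis .
    qed
    thus ?thesis by (intro add_left_mono sum_mono) auto
  qed
  finally have A0: "2 * (\<Sum>i\<in>I-K. SS X (insert i K)) \<le> m * S + (\<Sum>x\<in>X. 4 * c x * (m * ln 2 - ln (c x)))" .
  have A: "2 * (\<Sum>i\<in>I-K. SS X (insert i K)) \<le> m * S + 4 * (m * ln 2 * S - (\<Sum>x\<in>X. c x * ln (c x)))"
  proof -
    have "(\<Sum>x\<in>X. 4 * c x * (m * ln 2 - ln (c x))) = (\<Sum>x\<in>X. (4 * m * ln 2) * c x - 4 * (c x * ln (c x)))"
      by (intro sum.cong refl) (simp add: algebra_simps)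
    also have "\<dots> = (4 * m * ln 2) * S - 4 * (\<Sum>x\<in>X. c x * ln (c x))"
      unfolding Sdef by (simp add: sum_subtractf sum_distrib_left)
    finally have "(\<Sum>x\<in>X. 4 * c x * (m * ln 2 - ln (c x))) = 4 * (m * ln 2 * S - (\<Sum>x\<in>X. c x * ln (c x)))"
      by (simp add: algebra_simps)
    with A0 show ?thesis by simp
  qed
  define n where "n = real (card X)"
  have npos: "n > 0" using X n_def by (simp add: card_gt_0_iff)
  have D: "(\<Sum>x\<in>X. c x * (ln S - ln n - ln (c x))) \<le> 0"
  proof -
    have "(\<Sum>x\<in>X. c x * (ln S - ln n - ln (c x))) \<le> (\<Sum>x\<in>X. c x * (S / (n * c x) - 1))"
    proof (intro sum_mono)
      fix x assume x: "x \<in> X"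
      have "ln (S / (n * c x)) \<le> S / (n * c x) - 1" using Spos npos cpos[OF x] by (intro ln_le_minus_one) auto
      moreover have "ln (S / (n * c x)) = ln S - ln n - ln (c x)" using Spos npos cpos[OF x] by (simp add: ln_div ln_mult)
      ultimately show "c x * (ln S - ln n - ln (c x)) \<le> c x * (S / (n * c x) - 1)"
        using cpos[OF x] by (intro mult_left_mono) auto
    qed
    also have "\<dots> = (\<Sum>x\<in>X. S / n - c x)"
    proof (intro sum.cong refl)
      fix x assume "x \<in> X"
      hence "c x > 0" using cpos by blast
      thus "c x * (S / (n * c x) - 1) = S / n - c x" using npos by (simp add: field_simps)
    qed
    also have "\<dots> = 0" using npos unfolding n_def Sdef by (simp add: sum_subtractf)
    finally show ?thesis .
  qed
  have D': "- (\<Sum>x\<in>X. c x * ln (c x)) \<le> S * (ln n - ln S)"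
    using D by (simp add: Sdef algebra_simps sum_subtractf sum.distrib sum_distrib_left sum_distrib_right)
  have E: "n\<^sup>2 \<le> 2 ^ card K * S" using S_lower[OF X(1) finK X(2)] unfolding n_def S_def .
  have E': "2 * ln n \<le> real (card K) * ln 2 + ln S"
  proof -
    have "ln (n\<^sup>2) \<le> ln (2 ^ card K * S)" using E npos Spos by simp
    thus ?thesis using npos Spos by (simp add: ln_mult ln_realpow)
  qed
  have IK: "real (card I) = m + real (card K)"
    unfolding m_def using K I finK by (simp add: card_Diff_subset of_nat_diff card_mono)
  have "m * S + 4 * (m * ln 2 * S - (\<Sum>x\<in>X. c x * ln (c x)))
      \<le> m * S + 4 * (m * ln 2 * S + S * (ln n - ln S))" using D' by (smt (verit))
  also have "\<dots> \<le> m * S + 4 * (m * ln 2 * S + S * (real (card K) * ln 2 - ln n))"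
  proof -
    have "S * (ln n - ln S) \<le> S * (real (card K) * ln 2 - ln n)" using E' Spos by (intro mult_left_mono) auto
    thus ?thesis by (smt (verit))
  qed
  also have "\<dots> = S * (m + 4 * (real (card I) * ln 2 - ln n))"
    unfolding IK by (simp add: algebra_simps)
  finally show ?thesis using A unfolding S_def m_def n_def by (smt (verit))
qed

definition Ks :: "nat set \<Rightarrow> nat \<Rightarrow> nat set set" where
  "Ks I j = {K. K \<subseteq> I \<and> card K = j}"

definition AA :: "(nat\<Rightarrow>bool) set \<Rightarrow> nat set \<Rightarrow> nat \<Rightarrow> real" where
  "AA X I j = (\<Sum>K\<in>Ks I j. SS X K)"

lemma fin_Ks: "finite I \<Longrightarrow> finite (Ks I j)"
  unfolding Ks_def by (rule finite_subset[of _ "Pow I"]) auto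

lemma dc:
  fixes f :: "nat set \<Rightarrow> real"
  assumes I: "finite I"
  shows "(\<Sum>K\<in>Ks I j. \<Sum>i\<in>I-K. f (insert i K)) = real (Suc j) * (\<Sum>K\<in>Ks I (Suc j). f K)"
proof -
  have "(\<Sum>K\<in>Ks I j. \<Sum>i\<in>I-K. f (insert i K)) = (\<Sum>(K,i)\<in>(SIGMA K:Ks I j. I-K). f (insert i K))"
    using fin_Ks[OF I] I by (intro sum.Sigma) auto
  also have "\<dots> = (\<Sum>(K,i)\<in>(SIGMA K:Ks I (Suc j). K). f K)"
  proof (rule sum.reindex_bij_witness[where i="\<lambda>(K,i). (K - {i}, i)" and j="\<lambda>(K,i). (insert i K, i)"])
    fix a assume "a \<in> (SIGMA K:Ks I j. I-K)"
    thus "(case case a of (K, i) \<Rightarrow> (insert i K, i) of (K, i) \<Rightarrow> (K - {i}, i)) = a" by auto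
  next
    fix a assume a: "a \<in> (SIGMA K:Ks I j. I-K)"
    obtain K i where ai: "a = (K,i)" by fastforce
    have "finite K" using a ai I unfolding Ks_def by (auto intro: finite_subset)
    thus "(case a of (K, i) \<Rightarrow> (insert i K, i)) \<in> (SIGMA K:Ks I (Suc j). K)"
      using a ai unfolding Ks_def by auto
  next
    fix b assume "b \<in> (SIGMA K:Ks I (Suc j). K)"
    thus "(case case b of (K, i) \<Rightarrow> (K - {i}, i) of (K, i) \<Rightarrow> (insert i K, i)) = b" by auto
  next
    fix b assume b: "b \<in> (SIGMA K:Ks I (Suc j). K)"
    obtain K i where bi: "b = (K,i)" by fastforce
    have "finite K" using b bi I unfolding Ks_def by (auto intro: finite_subset)
    thus "(case b of (K, i) \<Rightarrow> (K - {i}, i)) \<in> (SIGMA K:Ks I j. I-K)"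
      using b bi unfolding Ks_def by auto
  next
    fix a assume "a \<in> (SIGMA K:Ks I j. I-K)"
    thus "(case case a of (K, i) \<Rightarrow> (insert i K, i) of (K, i) \<Rightarrow> f K) = (case a of (K, i) \<Rightarrow> f (insert i K))"
      by auto
  qed
  also have "\<dots> = (\<Sum>K\<in>Ks I (Suc j). \<Sum>i\<in>K. f K)"
    using fin_Ks[OF I] I unfolding Ks_def by (intro sum.Sigma[symmetric]) (auto intro: finite_subset)
  also have "\<dots> = (\<Sum>K\<in>Ks I (Suc j). real (Suc j) * f K)"
    by (intro sum.cong refl) (simp add: Ks_def)
  also have "\<dots> = real (Suc j) * (\<Sum>K\<in>Ks I (Suc j). f K)" by (simp add: sum_distrib_left)
  finally show ?thesis .
qed

lemma SS_nonneg: "SS X K \<ge> 0" unfolding SS_def by (intro sum_nonneg) auto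

lemma rec:
  assumes I: "finite I" and X: "finite X" "X \<noteq> {}" and XI: "\<forall>x\<in>X. \<forall>i. i \<notin> I \<longrightarrow> \<not> x i"
    and Lp: "real (card I) * ln 2 - ln (real (card X)) \<le> Lp"
  shows "2 * real (Suc j) * AA X I (Suc j) \<le> AA X I j * (real (card I - j) + 4 * Lp)"
proof -
  have "2 * real (Suc j) * AA X I (Suc j) = 2 * (\<Sum>K\<in>Ks I j. \<Sum>i\<in>I-K. SS X (insert i K))"
    unfolding AA_def using dc[OF I, where f="SS X" and j=j] by simp
  also have "\<dots> = (\<Sum>K\<in>Ks I j. 2 * (\<Sum>i\<in>I-K. SS X (insert i K)))" by (simp add: sum_distrib_left)
  also have "\<dots> \<le> (\<Sum>K\<in>Ks I j. SS X K * (real (card I - j) + 4 * Lp))"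
  proof (intro sum_mono)
    fix K assume K: "K \<in> Ks I j"
    have KI: "K \<subseteq> I" "card K = j" using K unfolding Ks_def by auto
    have c: "card (I - K) = card I - j" using KI I by (simp add: card_Diff_subset finite_subset)
    have "2 * (\<Sum>i\<in>I-K. SS X (insert i K)) \<le> SS X K * (real (card (I-K)) + 4 * (real (card I) * ln 2 - ln (real (card X))))"
      by (rule step[OF I X XI KI(1)])
    also have "\<dots> \<le> SS X K * (real (card I - j) + 4 * Lp)"
      unfolding c using Lp SS_nonneg by (intro mult_left_mono) auto
    finally show "2 * (\<Sum>i\<in>I-K. SS X (insert i K)) \<le> SS X K * (real (card I - j) + 4 * Lp)" .
  qed
  also have "\<dots> = AA X I j * (real (card I - j) + 4 * Lp)"
    unfolding AA_def by (simp add: sum_distrib_right)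
  finally show ?thesis .
qed

definition RR :: "(nat\<Rightarrow>bool) set \<Rightarrow> nat set \<Rightarrow> nat \<Rightarrow> real" where
  "RR X I j = 2 ^ j * AA X I j / real (card I choose j)"

lemma RR_nonneg: "RR X I j \<ge> 0"
  unfolding RR_def AA_def using SS_nonneg by (intro divide_nonneg_nonneg mult_nonneg_nonneg sum_nonneg) auto

lemma rec_R:
  assumes I: "finite I" and X: "finite X" "X \<noteq> {}" and XI: "\<forall>x\<in>X. \<forall>i. i \<notin> I \<longrightarrow> \<not> x i"
    and Lp: "real (card I) * ln 2 - ln (real (card X)) \<le> Lp" and j: "j < card I"
  shows "RR X I (Suc j) \<le> RR X I j * (1 + 4 * Lp / real (card I - j))"
proof -
  define N where "N = card I"
  define C where "C = real (N choose j)"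
  define C' where "C' = real (N choose Suc j)"
  have Cpos: "C > 0" unfolding C_def N_def using j by simp
  have Cid: "real (Suc j) * C' = real (N - j) * C"
  proof -
    have "Suc j * (N choose Suc j) = (N - j) * (N choose j)"
      using binomial_absorption[of j N] binomial_absorb_comp[of N j] by simp
    thus ?thesis unfolding C_def C'_def by (metis of_nat_mult)
  qed
  have Nj: "real (N - j) > 0" using j N_def by simp
  have C'pos: "C' > 0" unfolding C'_def N_def using j by simp
  have r: "2 * real (Suc j) * AA X I (Suc j) \<le> AA X I j * (real (N - j) + 4 * Lp)"
    using rec[OF I X XI Lp] unfolding N_def .
  have "RR X I (Suc j) = 2 ^ j * (2 * real (Suc j) * AA X I (Suc j)) / (real (Suc j) * C')"
  proof -
    have gen: "\<And>q A C' (p::real). q > 0 \<Longrightarrow> C' > 0 \<Longrightarrow> 2 * p * A / C' = p * (2 * q * A) / (q * C')"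
      by (simp add: field_simps)
    have "RR X I (Suc j) = 2 * 2^j * AA X I (Suc j) / C'" unfolding RR_def C'_def N_def by simp
    also have "\<dots> = 2 ^ j * (2 * real (Suc j) * AA X I (Suc j)) / (real (Suc j) * C')"
      by (rule gen) (use C'pos in auto)
    finally show ?thesis .
  qed
  also have "\<dots> = 2 ^ j * (2 * real (Suc j) * AA X I (Suc j)) / (real (N - j) * C)" unfolding Cid ..
  also have "\<dots> \<le> 2 ^ j * (AA X I j * (real (N - j) + 4 * Lp)) / (real (N - j) * C)"
    using r Cpos Nj by (intro divide_right_mono mult_left_mono) auto
  also have "\<dots> = RR X I j * (1 + 4 * Lp / real (N - j))"
    unfolding RR_def C_def N_def using Cpos Nj unfolding C_def N_def by (simp add: field_simps)
  finally show ?thesis unfolding N_def .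
qed

lemma R0: "finite I \<Longrightarrow> finite X \<Longrightarrow> RR X I 0 = (real (card X))\<^sup>2"
proof -
  assume I: "finite I" and X: "finite X"
  have "Ks I 0 = {{}}"
  proof
    show "Ks I 0 \<subseteq> {{}}"
    proof
      fix K assume "K \<in> Ks I 0"
      hence "K \<subseteq> I" "card K = 0" unfolding Ks_def by auto
      moreover have "finite K" using \<open>K \<subseteq> I\<close> I by (rule finite_subset)
      ultimately show "K \<in> {{}}" by simp
    qed
  qed (auto simp: Ks_def)
  moreover have "cls X {} x = X" for x unfolding cls_def agr_def by auto
  ultimately show ?thesis unfolding RR_def AA_def SS_def by (simp add: power2_eq_square)
qed

lemma R_bound:
  assumes I: "finite I" and X: "finite X" "X \<noteq> {}" and XI: "\<forall>x\<in>X. \<forall>i. i \<notin> I \<longrightarrow> \<not> x i"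
    and Lp: "real (card I) * ln 2 - ln (real (card X)) \<le> Lp" "0 \<le> Lp" and k: "k \<le> card I"
  shows "RR X I k \<le> (real (card X))\<^sup>2 * exp (real k * (4 * Lp / real (card I - k + 1)))"
proof -
  define a where "a = 4 * Lp / real (card I - k + 1)"
  have a0: "a \<ge> 0" unfolding a_def using Lp by simp
  have "j \<le> k \<Longrightarrow> RR X I j \<le> (real (card X))\<^sup>2 * (1 + a) ^ j" for j
  proof (induction j)
    case 0 thus ?case using R0[OF I X(1)] by simp
  next
    case (Suc j)
    have j: "j < card I" using Suc.prems k by simp
    have IH: "RR X I j \<le> (real (card X))\<^sup>2 * (1 + a) ^ j" using Suc by simp
    have "RR X I (Suc j) \<le> RR X I j * (1 + 4 * Lp / real (card I - j))"
      by (rule rec_R[OF I X XI Lp(1) j])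
    also have "\<dots> \<le> RR X I j * (1 + a)"
    proof -
      have "real (card I - k + 1) \<le> real (card I - j)" using Suc.prems k by simp
      moreover have "real (card I - k + 1) > 0" by simp
      ultimately have "4 * Lp / real (card I - j) \<le> a" unfolding a_def using Lp(2)
        by (intro divide_left_mono) auto
      thus ?thesis using RR_nonneg by (intro mult_left_mono) auto
    qed
    also have "\<dots> \<le> (real (card X))\<^sup>2 * (1 + a) ^ j * (1 + a)"
      using IH a0 by (intro mult_right_mono) auto
    finally show ?case by (simp add: algebra_simps)
  qed
  hence "RR X I k \<le> (real (card X))\<^sup>2 * (1 + a) ^ k" by simp
  also have "\<dots> \<le> (real (card X))\<^sup>2 * (exp a) ^ k"
    using a0 by (intro mult_left_mono power_mono) auto
  also have "(exp a) ^ k = exp (real k * a)" by (simp add: exp_of_nat_mult)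
  finally show ?thesis unfolding a_def .
qed

definition mix :: "nat set \<Rightarrow> (nat\<Rightarrow>bool) \<Rightarrow> (nat\<Rightarrow>bool) \<Rightarrow> (nat\<Rightarrow>bool)" where
  "mix K x y = (\<lambda>i. if i \<in> K then x i else y i)"

lemma card_fun:
  fixes K :: "nat set" and z :: "nat \<Rightarrow> bool"
  assumes "finite K"
  shows "card {y. \<forall>i. i \<notin> K \<longrightarrow> y i = z i} = 2 ^ card K"
proof -
  have "bij_betw (\<lambda>y. {i\<in>K. y i}) {y. \<forall>i. i \<notin> K \<longrightarrow> y i = z i} (Pow K)"
  proof (rule bij_betwI[where g="\<lambda>A i. if i \<in> K then i \<in> A else z i"])
    show "(\<lambda>y. {i \<in> K. y i}) \<in> {y. \<forall>i. i \<notin> K \<longrightarrow> y i = z i} \<rightarrow> Pow K" by auto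
    show "(\<lambda>A i. if i \<in> K then i \<in> A else z i) \<in> Pow K \<rightarrow> {y. \<forall>i. i \<notin> K \<longrightarrow> y i = z i}" by auto
    show "(\<lambda>i. if i \<in> K then i \<in> {i \<in> K. y i} else z i) = y" if "y \<in> {y. \<forall>i. i \<notin> K \<longrightarrow> y i = z i}" for y
      using that by (auto simp: fun_eq_iff)
    show "{i \<in> K. if i \<in> K then i \<in> A else z i} = A" if "A \<in> Pow K" for A
      using that by auto
  qed
  hence "card {y. \<forall>i. i \<notin> K \<longrightarrow> y i = z i} = card (Pow K)" by (rule bij_betw_same_card)
  thus ?thesis using assms by (simp add: card_Pow)
qed

lemma cube_alt: "cube n = {y. \<forall>i. i \<notin> {..<n} \<longrightarrow> y i = (\<lambda>_. False) i}"
  unfolding cube_def by auto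

lemma card_cube: "card (cube n) = 2 ^ n"
  unfolding cube_alt by (subst card_fun) auto

lemma fin_cube: "finite (cube n)"
  using card_cube by (metis card_eq_0_iff power_not_zero zero_neq_numeral)

lemma cube_ne: "cube n \<noteq> {}"
  using card_cube by (metis card.empty power_not_zero zero_neq_numeral)

lemma fiber:
  assumes K: "K \<subseteq> {..<n}" and X: "X \<subseteq> cube n"
  shows "card {y\<in>cube n. mix K x y \<in> X} = 2 ^ card K * card (cls X K x)"
proof -
  have finK: "finite K" using K finite_subset by blast
  have finX: "finite X" using X fin_cube finite_subset by blast
  define F where "F z = {y. \<forall>i. i \<notin> K \<longrightarrow> y i = z i}" for z :: "nat\<Rightarrow>bool"
  have cF: "card (F z) = 2 ^ card K" for z unfolding F_def using card_fun[OF finK] .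
  have fF: "finite (F z)" for z using cF by (metis card_eq_0_iff power_not_zero zero_neq_numeral)
  have eq: "{y\<in>cube n. mix K x y \<in> X} = (\<Union>z\<in>cls X K x. F z)"
  proof
    show "{y\<in>cube n. mix K x y \<in> X} \<subseteq> (\<Union>z\<in>cls X K x. F z)"
    proof
      fix y assume y: "y \<in> {y\<in>cube n. mix K x y \<in> X}"
      hence "mix K x y \<in> cls X K x" unfolding cls_def agr_def mix_def by auto
      moreover have "y \<in> F (mix K x y)" unfolding F_def mix_def by auto
      ultimately show "y \<in> (\<Union>z\<in>cls X K x. F z)" by blast
    qed
  next
    show "(\<Union>z\<in>cls X K x. F z) \<subseteq> {y\<in>cube n. mix K x y \<in> X}"
    proof
      fix y assume "y \<in> (\<Union>z\<in>cls X K x. F z)"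
      then obtain z where z: "z \<in> cls X K x" "y \<in> F z" by blast
      have zX: "z \<in> X" "\<forall>i\<in>K. x i = z i" using z(1) unfolding cls_def agr_def by auto
      have zc: "z \<in> cube n" using zX X by auto
      have "mix K x y = z" using zX z(2) unfolding mix_def F_def by (auto simp: fun_eq_iff)
      moreover have "y \<in> cube n"
      proof -
        have "\<forall>i\<ge>n. i \<notin> K" using K by auto
        thus ?thesis using zc z(2) unfolding cube_def F_def by auto
      qed
      ultimately show "y \<in> {y\<in>cube n. mix K x y \<in> X}" using zX by auto
    qed
  qed
  have "card (\<Union>z\<in>cls X K x. F z) = (\<Sum>z\<in>cls X K x. card (F z))"
  proof (rule card_UN_disjoint)
    show "finite (cls X K x)" using fin_cls[OF finX] .
    show "\<forall>z\<in>cls X K x. finite (F z)" using fF by blast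
    show "\<forall>z\<in>cls X K x. \<forall>w\<in>cls X K x. z \<noteq> w \<longrightarrow> F z \<inter> F w = {}"
    proof (intro ballI impI)
      fix z w assume zw: "z \<in> cls X K x" "w \<in> cls X K x" "z \<noteq> w"
      show "F z \<inter> F w = {}"
      proof (rule ccontr)
        assume "F z \<inter> F w \<noteq> {}"
        then obtain y where "y \<in> F z" "y \<in> F w" by blast
        hence "z = w" using zw(1,2) unfolding F_def cls_def agr_def by (auto simp: fun_eq_iff)
        thus False using zw(3) by simp
      qed
    qed
  qed
  thus ?thesis unfolding eq cF by simp
qed

lemma prob_bind: "measure_pmf.prob (bind_pmf M f) A = (\<integral>x. measure_pmf.prob (f x) A \<partial>M)"
  unfolding measure_pmf_bind
  by (subst measure_pmf.measure_bind[where N="count_space UNIV"])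
     (auto simp: measure_subprob intro!: measurable_pmf_measure1)

lemma prob_inner:
  "measure_pmf.prob (map_pmf (mix K x) (pmf_of_set (cube n))) X
     = real (card {y\<in>cube n. mix K x y \<in> X}) / 2 ^ n"
proof -
  have "cube n \<inter> mix K x -` X = {y\<in>cube n. mix K x y \<in> X}" by auto
  thus ?thesis
    using fin_cube cube_ne by (simp add: measure_pmf_of_set card_cube)
qed

lemma prob_formula:
  assumes X: "X \<subseteq> cube n" "X \<noteq> {}" and k: "k \<le> n"
  shows "measure_pmf.prob (pmf_of_set X \<bind> T n k) X
     = RR X {..<n} k / (2 ^ n * real (card X))"
proof -
  have finX: "finite X" using X fin_cube finite_subset by blast
  define Kset where "Kset = {K. K \<subseteq> {..<n} \<and> card K = k}"
  have KsE: "Kset = Ks {..<n} k" unfolding Kset_def Ks_def ..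
  have finKs: "finite Kset" unfolding KsE by (rule fin_Ks) simp
  have cardKs: "card Kset = n choose k" unfolding Kset_def by (subst n_subsets) auto
  have KsNE: "Kset \<noteq> {}" using cardKs k by (metis card.empty zero_less_binomial_iff not_less less_numeral_extra(3))
  have Tx: "measure_pmf.prob (T n k x) X = (\<Sum>K\<in>Kset. real (card {y\<in>cube n. mix K x y \<in> X}) / 2 ^ n) / real (card Kset)" for x
  proof -
    have "T n k x = pmf_of_set Kset \<bind> (\<lambda>K. map_pmf (mix K x) (pmf_of_set (cube n)))"
      unfolding T_def Kset_def mix_def map_pmf_def ..
    thus ?thesis using finKs KsNE by (simp add: prob_bind integral_pmf_of_set prob_inner sum_divide_distrib[symmetric] del: measure_map_pmf)
  qed
  have "measure_pmf.prob (pmf_of_set X \<bind> T n k) X = (\<Sum>x\<in>X. measure_pmf.prob (T n k x) X) / real (card X)"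
    using finX X(2) by (simp add: prob_bind integral_pmf_of_set)
  also have "\<dots> = (\<Sum>x\<in>X. (\<Sum>K\<in>Kset. 2 ^ k * real (card (cls X K x)))) / (2 ^ n * real (card Kset) * real (card X))"
  proof -
    have "(\<Sum>x\<in>X. measure_pmf.prob (T n k x) X) = (\<Sum>x\<in>X. (\<Sum>K\<in>Kset. 2 ^ k * real (card (cls X K x)))) / (2 ^ n * real (card Kset))"
    proof -
      have "(\<Sum>x\<in>X. measure_pmf.prob (T n k x) X) = (\<Sum>x\<in>X. (\<Sum>K\<in>Kset. 2 ^ k * real (card (cls X K x))) / (2 ^ n * real (card Kset)))"
      proof (intro sum.cong refl)
        fix x assume "x \<in> X"
        have "(\<Sum>K\<in>Kset. real (card {y\<in>cube n. mix K x y \<in> X}) / 2 ^ n) = (\<Sum>K\<in>Kset. 2 ^ k * real (card (cls X K x))) / 2 ^ n"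
          unfolding sum_divide_distrib
        proof (intro sum.cong refl)
          fix K assume "K \<in> Kset"
          hence "K \<subseteq> {..<n}" "card K = k" unfolding Kset_def by auto
          thus "real (card {y\<in>cube n. mix K x y \<in> X}) / 2 ^ n = 2 ^ k * real (card (cls X K x)) / 2 ^ n"
            using fiber[OF _ X(1)] by simp
        qed
        thus "measure_pmf.prob (T n k x) X = (\<Sum>K\<in>Kset. 2 ^ k * real (card (cls X K x))) / (2 ^ n * real (card Kset))"
          unfolding Tx by simp
      qed
      thus ?thesis by (simp add: sum_divide_distrib)
    qed
    thus ?thesis by simp
  qed
  also have "(\<Sum>x\<in>X. (\<Sum>K\<in>Kset. 2 ^ k * real (card (cls X K x)))) = 2 ^ k * AA X {..<n} k"
    unfolding AA_def SS_def KsE[symmetric] by (simp add: sum.swap[of _ Kset] sum_distrib_left)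
  also have "2 ^ k * AA X {..<n} k / (2 ^ n * real (card Kset) * real (card X)) = RR X {..<n} k / (2 ^ n * real (card X))"
    unfolding RR_def cardKs by simp
  finally show ?thesis .
qed

lemma main_bound:
  assumes X: "X \<subseteq> cube n" "X \<noteq> {}" and k: "k \<le> n" and h: "exp (- h) \<le> mu n X"
  shows "measure_pmf.prob (pmf_of_set X \<bind> T n k) X \<le> mu n X * exp (real k * (4 * max h 0 / real (n - k + 1)))"
proof -
  have finX: "finite X" using X fin_cube finite_subset by blast
  have XI: "\<forall>x\<in>X. \<forall>i. i \<notin> {..<n} \<longrightarrow> \<not> x i" using X(1) unfolding cube_def by auto
  have cX: "real (card X) > 0" using finX X(2) by (simp add: card_gt_0_iff)
  have mu: "mu n X = real (card X) / 2 ^ n" unfolding mu_def ..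
  have mupos: "mu n X > 0" using cX mu by simp
  have "ln (exp (- h)) \<le> ln (mu n X)" using h mupos by (subst ln_le_cancel_iff) auto
  hence "- h \<le> ln (real (card X)) - real n * ln 2"
    unfolding mu using cX by (simp add: ln_div ln_realpow)
  hence Lp: "real (card {..<n}) * ln 2 - ln (real (card X)) \<le> max h 0" by simp
  define E where "E = exp (real k * (4 * max h 0 / real (card {..<n} - k + 1)))"
  have RB: "RR X {..<n} k \<le> (real (card X))\<^sup>2 * E"
    unfolding E_def by (rule R_bound[OF _ finX X(2) XI Lp]) (use k in auto)
  have "measure_pmf.prob (pmf_of_set X \<bind> T n k) X = RR X {..<n} k / (2 ^ n * real (card X))"
    by (rule prob_formula[OF X k])
  also have "\<dots> \<le> (real (card X))\<^sup>2 * E / (2 ^ n * real (card X))"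
    using RB cX by (intro divide_right_mono) auto
  also have "\<dots> = mu n X * E" unfolding mu using cX by (simp add: power2_eq_square)
  finally show ?thesis unfolding E_def by simp
qed

lemma asym:
  fixes k :: "nat \<Rightarrow> nat" and h :: "nat \<Rightarrow> real"
  assumes k_log: "(\<lambda>n. real (k n)) \<in> O(\<lambda>n. ln (real n))"
    and h_small: "h \<in> o(\<lambda>n. real n / (ln (real n))\<^sup>2)"
    and eta: "\<eta> > 0"
  shows "eventually (\<lambda>n. k n \<le> n \<and> real (k n) * (4 * max (h n) 0 / real (n - k n + 1)) < ln (1 + \<eta>)) at_top"
proof -
  obtain c where c: "c > 0" "eventually (\<lambda>n. norm (real (k n)) \<le> c * norm (ln (real n))) at_top"
    using landau_o.bigE[OF k_log] by blast
  define \<epsilon> where "\<epsilon> = ln (1 + \<eta>) / (16 * c)"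
  have l1: "ln (1 + \<eta>) > 0" using eta by simp
  have ep: "\<epsilon> > 0" unfolding \<epsilon>_def using l1 c by simp
  have ev_h: "eventually (\<lambda>n. norm (h n) \<le> \<epsilon> * norm (real n / (ln (real n))\<^sup>2)) at_top"
    using landau_o.smallD[OF h_small ep] .
  have lno: "(\<lambda>n::nat. ln (real n)) \<in> o(\<lambda>n. real n)" by real_asymp
  have ev_ln: "eventually (\<lambda>n. norm (ln (real n)) \<le> (1 / (2 * c)) * norm (real n)) at_top"
    using landau_o.smallD[OF lno, of "1 / (2 * c)"] c by simp
  have ev1: "eventually (\<lambda>n::nat. ln (real n) \<ge> 1) at_top" by real_asymp
  show ?thesis using c(2) ev_h ev_ln ev1
  proof eventually_elim
    case (elim n)
    define lnn0 where "lnn0 = ln (real n)"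
    have l: "lnn0 \<ge> 1" using elim(4) unfolding lnn0_def .
    have npos: "real n > 0" using l unfolding lnn0_def by (metis ln_le_zero_iff not_le of_nat_0_less_iff zero_less_one order.strict_trans2 gr0I ln_0 of_nat_0)
    have K: "real (k n) \<le> c * lnn0" using elim(1) l unfolding lnn0_def by simp
    have lnn: "c * lnn0 \<le> real n / 2" using elim(3) l c unfolding lnn0_def by (simp add: field_simps)
    have kn: "real (k n) \<le> real n / 2" using K lnn by linarith
    hence kn': "k n \<le> n" by simp
    have D: "real (n - k n + 1) \<ge> real n / 2" using kn kn' by (simp add: of_nat_diff)
    have Dpos: "real n / 2 > 0" using npos by simp
    define H where "H = max (h n) 0"
    have H0: "H \<ge> 0" unfolding H_def by simp
    have H: "H \<le> \<epsilon> * (real n / lnn0\<^sup>2)"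
    proof -
      have "h n \<le> \<epsilon> * (real n / lnn0\<^sup>2)" using elim(2) l npos unfolding lnn0_def by (simp add: abs_le_iff)
      moreover have "0 \<le> \<epsilon> * (real n / lnn0\<^sup>2)" using ep npos by simp
      ultimately show ?thesis unfolding H_def by simp
    qed
    have "real (k n) * (4 * H / real (n - k n + 1)) \<le> (c * lnn0) * (4 * H / real (n - k n + 1))"
      using K H0 by (intro mult_right_mono) auto
    also have "\<dots> \<le> (c * lnn0) * (4 * H / (real n / 2))"
      using H0 D Dpos c l by (intro mult_left_mono divide_left_mono) auto
    also have "\<dots> \<le> (c * lnn0) * (4 * (\<epsilon> * (real n / lnn0\<^sup>2)) / (real n / 2))"
      using H Dpos c l by (intro mult_left_mono divide_right_mono) auto
    also have "\<dots> = 8 * c * \<epsilon> / lnn0" using npos l by (simp add: field_simps power2_eq_square)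
    also have "\<dots> \<le> 8 * c * \<epsilon>" using l c ep by (simp add: divide_le_eq)
    also have "\<dots> = ln (1 + \<eta>) / 2" unfolding \<epsilon>_def using c by simp
    also have "\<dots> < ln (1 + \<eta>)" using l1 by simp
    finally show ?case using kn' unfolding H_def by simp
  qed
qed

theorem claimD:
  fixes k :: "nat \<Rightarrow> nat" and h :: "nat \<Rightarrow> real"
  assumes k_pos: "\<forall>n. 1 \<le> k n"
    and k_log: "(\<lambda>n. real (k n)) \<in> O(\<lambda>n. ln (real n))"
    and h_small: "h \<in> o(\<lambda>n. real n / (ln (real n))\<^sup>2)"
  shows "\<forall>\<eta>>0. \<exists>n0. \<forall>n\<ge>n0. \<forall>X. X \<subseteq> cube n \<and> mu n X \<ge> exp (- h n) \<longrightarrow>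
           measure_pmf.prob (pmf_of_set X \<bind> T n (k n)) X < (1 + \<eta>) * mu n X"
proof (intro allI impI)
  fix \<eta> :: real assume eta: "\<eta> > 0"
  obtain n0 where n0: "\<And>n. n \<ge> n0 \<Longrightarrow> k n \<le> n \<and> real (k n) * (4 * max (h n) 0 / real (n - k n + 1)) < ln (1 + \<eta>)"
    using asym[OF k_log h_small eta] unfolding eventually_at_top_linorder by blast
  show "\<exists>n0. \<forall>n\<ge>n0. \<forall>X. X \<subseteq> cube n \<and> mu n X \<ge> exp (- h n) \<longrightarrow>
           measure_pmf.prob (pmf_of_set X \<bind> T n (k n)) X < (1 + \<eta>) * mu n X"
  proof (intro exI allI impI)
    fix n X assume n: "n0 \<le> n" and XX: "X \<subseteq> cube n \<and> exp (- h n) \<le> mu n X"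
    have mupos: "mu n X > 0" using XX by (metis exp_gt_zero order.strict_trans2)
    have Xne: "X \<noteq> {}" using mupos unfolding mu_def by auto
    note nn = n0[OF n]
    have "measure_pmf.prob (pmf_of_set X \<bind> T n (k n)) X \<le> mu n X * exp (real (k n) * (4 * max (h n) 0 / real (n - k n + 1)))"
      using main_bound[of X n "k n" "h n"] XX Xne nn by blast
    also have "\<dots> < mu n X * (1 + \<eta>)"
    proof -
      have "exp (real (k n) * (4 * max (h n) 0 / real (n - k n + 1))) < exp (ln (1 + \<eta>))"
        using exp_less_mono[OF conjunct2[OF nn]] .
      also have "\<dots> = 1 + \<eta>" using eta by simp
      finally show ?thesis using mupos by simp
    qed
    finally show "measure_pmf.prob (pmf_of_set X \<bind> T n (k n)) X < (1 + \<eta>) * mu n X" by (simp add: mult.commute)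
  qed
qed

end
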